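(* The finitary group $F$ and the full isometry group $W$ of the rooted tree $X^*$ are layered and saturated.
   Context: $X$ is a finite alphabet with $|X|\ge2$, $\mathcal T=X^*$, $W=\mathrm{Aut}(\mathcal T)$. $\mathrm{Sym}(X)$ acts on $\mathcal T$ by $(x_1x_2\cdots x_n)^\pi=x_1^\pi x_2\cdots x_n$. For $v\in X^*$, $g\in W$: $v*g$ acts as $g$ on the subtree $v\mathcal T$ ($(vw)^{v*g}=vw^g$) and fixes other vertices; $g@v$ is the state, $(vw)^g=v^gw^{g@v}$. The finitary group is $F=\langle v*\pi: v\in X^*,\pi\in\mathrm{Sym}(X)\rangle$. $G\le W$ is layered if it is transitive on every $X^n$ and $x*G\le G$ for all $x\in X$; saturated if for every $n$ it contains a characteristic subgroup $H_n$ fixing $X^n$ with $\{h@v:h\in H_n\}$ transitive on each level of $\mathcal T$ for every $v\in X^n$. *)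

theory Defs
  imports "HOL-Algebra.Generated_Groups"
begin

text \<open>The tree X^* is modelled by words of type 'a list over a finite alphabet 'a;
the head of a list is the letter closest to the root. Automorphisms act on the right,
so the group product g h means "first g, then h".\<close>

definition tree_aut :: "('a list \<Rightarrow> 'a list) \<Rightarrow> bool" where
  "tree_aut g \<longleftrightarrow> bij g \<and> g [] = [] \<and> (\<forall>v x. \<exists>y. g (v @ [x]) = g v @ [y])"

definition W :: "('a list \<Rightarrow> 'a list) set" where
  "W = {g. tree_aut g}"

definition tgrp :: "('a list \<Rightarrow> 'a list) set \<Rightarrow> ('a list \<Rightarrow> 'a list) monoid" where
  "tgrp S = \<lparr>carrier = S, mult = (\<lambda>g h. h \<circ> g), one = id\<rparr>"

definition perm_act :: "('a \<Rightarrow> 'a) \<Rightarrow> 'a list \<Rightarrow> 'a list" where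
  "perm_act \<pi> u = (case u of [] \<Rightarrow> [] | x # w \<Rightarrow> \<pi> x # w)"

definition star :: "'a list \<Rightarrow> ('a list \<Rightarrow> 'a list) \<Rightarrow> 'a list \<Rightarrow> 'a list" where
  "star v g u = (if take (length v) u = v then v @ g (drop (length v) u) else u)"

text \<open>The state g@v: (vw)^g = v^g w^(g@v).\<close>
definition state :: "('a list \<Rightarrow> 'a list) \<Rightarrow> 'a list \<Rightarrow> 'a list \<Rightarrow> 'a list" where
  "state g v w = drop (length v) (g (v @ w))"

definition finitary :: "('a list \<Rightarrow> 'a list) set" where
  "finitary = generate (tgrp W) {star v (perm_act \<pi>) | v \<pi>. bij \<pi>}"

definition level_transitive :: "('a list \<Rightarrow> 'a list) set \<Rightarrow> bool" where
  "level_transitive S \<longleftrightarrow>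
     (\<forall>n u w. length u = n \<and> length w = n \<longrightarrow> (\<exists>g\<in>S. g u = w))"

definition layered :: "('a list \<Rightarrow> 'a list) set \<Rightarrow> bool" where
  "layered G \<longleftrightarrow> subgroup G (tgrp W) \<and> level_transitive G \<and>
     (\<forall>x. \<forall>g\<in>G. star [x] g \<in> G)"

definition characteristic :: "'g set \<Rightarrow> ('g, 'b) monoid_scheme \<Rightarrow> bool" where
  "characteristic H Gr \<longleftrightarrow> subgroup H Gr \<and> (\<forall>\<phi>\<in>iso Gr Gr. \<phi> ` H = H)"

definition saturated :: "('a list \<Rightarrow> 'a list) set \<Rightarrow> bool" where
  "saturated G \<longleftrightarrow> subgroup G (tgrp W) \<and>
     (\<forall>n. \<exists>H. characteristic H (tgrp G) \<and>
        (\<forall>h\<in>H. \<forall>u. length u = n \<longrightarrow> h u = u) \<and>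
        (\<forall>v. length v = n \<longrightarrow> level_transitive {state h v | h. h \<in> H}))"

end

theory Submission
  imports Defs
begin


abbreviation hinv :: "('b \<Rightarrow> 'c) \<Rightarrow> 'c \<Rightarrow> 'b" where "hinv f \<equiv> inv_into UNIV f"

lemma tree_aut_app_ex:
  assumes "tree_aut g"
  shows "\<exists>r. g (v @ w) = g v @ r \<and> length r = length w"
proof (induction w rule: rev_induct)
  case Nil then show ?case by simp
next
  case (snoc x w)
  then obtain r where r: "g (v @ w) = g v @ r" "length r = length w" by blast
  from assms obtain y where "g ((v @ w) @ [x]) = g (v @ w) @ [y]" unfolding tree_aut_def by blast
  then show ?case using r by (intro exI[of _ "r @ [y]"]) simp
qed

lemma tree_aut_len:
  assumes "tree_aut g" shows "length (g v) = length v"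
  using tree_aut_app_ex[OF assms, of "[]" v] assms by (auto simp: tree_aut_def)

lemma tree_aut_app:
  assumes "tree_aut g" shows "g (v @ w) = g v @ state g v w"
proof -
  obtain r where "g (v @ w) = g v @ r" using tree_aut_app_ex[OF assms] by blast
  then show ?thesis using tree_aut_len[OF assms, of v] by (simp add: state_def)
qed

lemma tree_aut_inj: "tree_aut g \<Longrightarrow> inj g"
  by (simp add: tree_aut_def bij_is_inj)

lemma tree_aut_comp:
  assumes "tree_aut g" "tree_aut h" shows "tree_aut (g \<circ> h)"
  unfolding tree_aut_def
proof (intro conjI allI)
  show "bij (g \<circ> h)" using assms by (simp add: tree_aut_def bij_comp)
  show "(g \<circ> h) [] = []" using assms by (simp add: tree_aut_def)
  fix v x
  obtain y where y: "h (v @ [x]) = h v @ [y]" using assms(2) by (auto simp: tree_aut_def)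
  obtain z where "g (h v @ [y]) = g (h v) @ [z]" using assms(1) by (auto simp: tree_aut_def)
  then show "\<exists>y. (g \<circ> h) (v @ [x]) = (g \<circ> h) v @ [y]" using y by auto
qed

lemma tree_aut_id: "tree_aut id"
  by (simp add: tree_aut_def)

lemma tree_aut_inv:
  assumes "tree_aut (g :: 'a::finite list \<Rightarrow> 'a list)" shows "tree_aut (hinv g)"
  unfolding tree_aut_def
proof (intro conjI allI)
  have b: "bij g" using assms by (simp add: tree_aut_def)
  show "bij (hinv g)" using b by (simp add: bij_imp_bij_inv)
  show "hinv g [] = []" using assms b by (metis bij_inv_eq_iff tree_aut_def)
  fix v x
  define v' where "v' = hinv g v"
  have gv': "g v' = v" using b by (simp add: v'_def bij_is_surj surj_f_inv_f)
  define \<phi> where "\<phi> z = last (g (v' @ [z]))" for z :: 'a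
  have phi: "g (v' @ [z]) = v @ [\<phi> z]" for z
  proof -
    obtain y where "g (v' @ [z]) = g v' @ [y]" using assms by (auto simp: tree_aut_def)
    then show ?thesis by (simp add: \<phi>_def gv')
  qed
  have "inj \<phi>"
  proof
    fix a b assume "\<phi> a = \<phi> b"
    then have "g (v' @ [a]) = g (v' @ [b])" by (simp add: phi)
    then show "a = b" using b by (simp add: bij_is_inj inj_eq)
  qed
  then have "surj \<phi>" by (simp add: finite_UNIV_inj_surj)
  then obtain z where "\<phi> z = x" by (metis surjD)
  then have "g (v' @ [z]) = v @ [x]" by (simp add: phi)
  then have "hinv g (v @ [x]) = v' @ [z]" using b by (metis bij_inv_eq_iff)
  then show "\<exists>y. hinv g (v @ [x]) = hinv g v @ [y]" by (simp add: v'_def)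
qed

lemma inv_comp_self: "tree_aut g \<Longrightarrow> hinv g \<circ> g = id"
  by (simp add: tree_aut_def bij_is_inj)
lemma comp_inv_self: "tree_aut g \<Longrightarrow> g \<circ> hinv g = id"
  by (auto simp: tree_aut_def bij_is_surj surj_f_inv_f fun_eq_iff)

lemma tgrp_simps [simp]:
  "carrier (tgrp S) = S" "mult (tgrp S) g h = h \<circ> g" "one (tgrp S) = id"
  by (simp_all add: tgrp_def)

lemma group_W: "group (tgrp (W :: ('a::finite list \<Rightarrow> 'a list) set))"
proof (rule groupI)
  fix x y z :: "'a list \<Rightarrow> 'a list"
  assume "x \<in> carrier (tgrp W)"
  then have x: "tree_aut x" by (simp add: W_def)
  show "\<exists>y\<in>carrier (tgrp W). y \<otimes>\<^bsub>tgrp W\<^esub> x = \<one>\<^bsub>tgrp W\<^esub>"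
    using x tree_aut_inv[OF x] by (intro bexI[of _ "hinv x"]) (simp_all add: W_def comp_inv_self)
  show "\<one>\<^bsub>tgrp W\<^esub> \<otimes>\<^bsub>tgrp W\<^esub> x = x" by simp
next
  fix x y :: "'a list \<Rightarrow> 'a list" assume "x \<in> carrier (tgrp W)" "y \<in> carrier (tgrp W)"
  then show "x \<otimes>\<^bsub>tgrp W\<^esub> y \<in> carrier (tgrp W)" by (simp add: W_def tree_aut_comp)
qed (auto simp: W_def tree_aut_id comp_assoc)

lemma inv_W: "g \<in> W \<Longrightarrow> inv\<^bsub>tgrp (W :: ('a::finite list \<Rightarrow> 'a list) set)\<^esub> g = hinv g"
  by (rule group.inv_equality[OF group_W]) (simp_all add: W_def tree_aut_inv comp_inv_self)

lemma pow_tgrp: "g [^]\<^bsub>tgrp S\<^esub> (n::nat) = g ^^ n"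
  by (induction n) (simp_all add: funpow_Suc_right)



lemma star_comp: "star v g \<circ> star v h = star v (g \<circ> h)"
  by (auto simp: fun_eq_iff star_def)

lemma star_id: "star v id = id"
  by (auto simp: fun_eq_iff star_def) (metis append_take_drop_id)

lemma star_star: "star u (star v g) = star (u @ v) g"
proof
  fix w
  show "star u (star v g) w = star (u @ v) g w"
  proof (cases "take (length u) w = u")
    case True
    have w: "u @ drop (length u) w = w" using True by (metis append_take_drop_id)
    have eq: "take (length u + length v) w = u @ take (length v) (drop (length u) w)"
      using True by (simp add: take_add)
    have l: "star u (star v g) w = u @ star v g (drop (length u) w)"
      using True by (simp add: star_def[of u])
    show ?thesis
    proof (cases "take (length v) (drop (length u) w) = v")
      case True
      then show ?thesis unfolding l by (simp add: star_def eq drop_drop add.commute)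
    next
      case False
      then show ?thesis unfolding l by (simp add: star_def eq w)
    qed
  next
    case False
    have "take (length u) (take (length u + length v) w) = take (length u) w" by simp
    then have "take (length u + length v) w \<noteq> u @ v" using False by (metis append_eq_conv_conj)
    then show ?thesis using False by (simp add: star_def)
  qed
qed

lemma tree_aut_star:
  assumes "tree_aut g" shows "tree_aut (star v g)"
  unfolding tree_aut_def
proof (intro conjI allI)
  have "star v g \<circ> star v (hinv g) = id" "star v (hinv g) \<circ> star v g = id"
    using assms by (simp_all add: star_comp star_id comp_inv_self inv_comp_self)
  then show "bij (star v g)" using o_bij by blast
  show "star v g [] = []" using assms by (cases v) (auto simp: star_def tree_aut_def)
  fix u x
  show "\<exists>y. star v g (u @ [x]) = star v g u @ [y]"
  proof (cases "length v \<le> length u")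
    case True
    then have d: "drop (length v) (u @ [x]) = drop (length v) u @ [x]" by simp
    have t: "take (length v) (u @ [x]) = take (length v) u" using True by simp
    show ?thesis
    proof (cases "take (length v) u = v")
      case True
      obtain y where "g (drop (length v) u @ [x]) = g (drop (length v) u) @ [y]"
        using assms unfolding tree_aut_def by blast
      then show ?thesis using True d t by (simp add: star_def)
    next
      case False then show ?thesis using t by (simp add: star_def)
    qed
  next
    case False
    then have t1: "take (length v) u = u" by simp
    have t1': "take (length v) u \<noteq> v" using False t1 by auto
    show ?thesis
    proof (cases "take (length v) (u @ [x]) = v")
      case True
      have "length (take (length v) (u @ [x])) = length v" using True by simp
      then have "length v = Suc (length u)" using False by (simp add: min_def split: if_splits)
      then have "v = u @ [x]" using True by simp
      then show ?thesis using t1' assms by (simp add: star_def tree_aut_def)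
    next
      case False then show ?thesis using t1' by (simp add: star_def)
    qed
  qed
qed

lemma tree_aut_perm_act:
  assumes "bij \<pi>" shows "tree_aut (perm_act \<pi>)"
  unfolding tree_aut_def
proof (intro conjI allI)
  have "perm_act \<pi> \<circ> perm_act (hinv \<pi>) = id" "perm_act (hinv \<pi>) \<circ> perm_act \<pi> = id"
    using assms by (auto simp: fun_eq_iff perm_act_def bij_is_surj bij_is_inj surj_f_inv_f split: list.splits)
  then show "bij (perm_act \<pi>)" using o_bij by blast
  show "perm_act \<pi> [] = []" by (simp add: perm_act_def)
  fix v x show "\<exists>y. perm_act \<pi> (v @ [x]) = perm_act \<pi> v @ [y]"
    by (cases v) (auto simp: perm_act_def)
qed

lemma state_id: "state id v = id"
  by (simp add: fun_eq_iff state_def)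

lemma state_comp:
  assumes "tree_aut g" "tree_aut h"
  shows "state (g \<circ> h) v = state g (h v) \<circ> state h v"
proof
  fix w
  have "(g \<circ> h) (v @ w) = g (h v @ state h v w)" by (simp add: tree_aut_app[OF assms(2)])
  also have "\<dots> = g (h v) @ state g (h v) (state h v w)" by (simp add: tree_aut_app[OF assms(1)])
  finally have e: "g (h (v @ w)) = g (h v) @ state g (h v) (state h v w)" by simp
  have l: "length (g (h v)) = length v" using tree_aut_len[OF assms(1)] tree_aut_len[OF assms(2)] by simp
  have "state (g \<circ> h) v w = drop (length v) (g (h (v @ w)))" by (simp add: state_def)
  also have "\<dots> = state g (h v) (state h v w)" unfolding e using l by simp
  finally show "state (g \<circ> h) v w = (state g (h v) \<circ> state h v) w" by simp
qed

lemma state_fix_comp: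
  assumes "tree_aut g" "tree_aut h" "h v = v"
  shows "state (g \<circ> h) v = state g v \<circ> state h v"
  using state_comp[OF assms(1,2)] assms(3) by simp

lemma tree_aut_state:
  assumes "tree_aut (g :: 'a::finite list \<Rightarrow> 'a list)" shows "tree_aut (state g v)"
  unfolding tree_aut_def
proof (intro conjI allI)
  have gi: "tree_aut (hinv g)" using tree_aut_inv[OF assms] .
  have hv: "hinv g (g v) = v" using assms by (simp add: tree_aut_def bij_is_inj)
  have "state g v \<circ> state (hinv g) (g v) = id"
    using state_comp[OF assms gi, of "g v"] hv comp_inv_self[OF assms] by (simp add: state_id)
  moreover have "state (hinv g) (g v) \<circ> state g v = id"
    using state_comp[OF gi assms, of v] inv_comp_self[OF assms] by (simp add: state_id)
  ultimately show "bij (state g v)" using o_bij by blast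
  show "state g v [] = []" using tree_aut_len[OF assms, of v] by (simp add: state_def)
  fix w x
  have "\<exists>y. g ((v @ w) @ [x]) = g (v @ w) @ [y]" using assms unfolding tree_aut_def by blast
  then obtain y where y: "g ((v @ w) @ [x]) = g (v @ w) @ [y]" by blast
  have e: "g (v @ (w @ [x])) = g v @ (state g v w @ [y])"
    using y tree_aut_app[OF assms, of v w] by simp
  have "state g v (w @ [x]) = drop (length v) (g (v @ (w @ [x])))" by (simp only: state_def)
  then show "\<exists>y. state g v (w @ [x]) = state g v w @ [y]"
    by (intro exI[of _ y]) (simp add: e tree_aut_len[OF assms])
qed

lemma state_star:
  assumes "tree_aut f"
  shows "state (star u f) v =
    (if take (length u) v = u then state f (drop (length u) v)
     else if take (length v) u = v then star (drop (length v) u) f else id)"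
proof (intro ext)
  fix w
  show "state (star u f) v w = (if take (length u) v = u then state f (drop (length u) v)
     else if take (length v) u = v then star (drop (length v) u) f else id) w"
  proof (cases "take (length u) v = u")
    case True
    have "length (take (length u) v) = length u" using True by simp
    then have lu: "length u \<le> length v" by (simp add: min_def split: if_splits)
    have "take (length u) (v @ w) = take (length u) v" using lu by simp
    then have "take (length u) (v @ w) = u" using True by simp
    moreover have "drop (length u) (v @ w) = drop (length u) v @ w" using lu by simp
    ultimately have "star u f (v @ w) = u @ f (drop (length u) v) @ state f (drop (length u) v) w"
      by (simp add: star_def tree_aut_app[OF assms])
    moreover have "length u + length (f (drop (length u) v)) = length v"
      using lu tree_aut_len[OF assms] by simp
    ultimately show ?thesis using True by (simp add: state_def[of "star u f" v])
  next
    case F1: False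
    show ?thesis
    proof (cases "take (length v) u = v")
      case True
      have lv: "length v < length u"
      proof (rule ccontr)
        assume "\<not> length v < length u"
        then have "take (length v) u = u" by simp
        then have "u = v" using True by simp
        then show False using F1 by simp
      qed
      define r where "r = drop (length v) u"
      have u: "u = v @ r" using True by (metis append_take_drop_id r_def)
      have "take (length u) (v @ w) = v @ take (length r) w" using u by simp
      then have "star u f (v @ w) = (if take (length r) w = r then v @ r @ f (drop (length r) w) else v @ w)"
        using u by (simp add: star_def)
      then show ?thesis using F1 True by (simp add: state_def[of "star u f" v] star_def[of r] r_def[symmetric])
    next
      case False
      have "take (length u) (v @ w) \<noteq> u"
      proof (cases "length u \<le> length v")
        case True then show ?thesis using F1 by simp
      next
        case False
        then have "take (length v) (take (length u) (v @ w)) = v" by (simp add: min_def)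
        then show ?thesis using \<open>take (length v) u \<noteq> v\<close> by metis
      qed
      then show ?thesis using F1 False by (simp add: state_def[of "star u f" v] star_def[of u])
    qed
  qed
qed

lemma state_perm_act:
  "state (perm_act \<pi>) r = (if r = [] then perm_act \<pi> else id)"
  by (cases r) (auto simp: fun_eq_iff state_def perm_act_def split: list.splits)



definition swp :: "'a \<Rightarrow> 'a \<Rightarrow> 'a \<Rightarrow> 'a" where
  "swp x y z = (if z = x then y else if z = y then x else z)"

abbreviation gens :: "('a list \<Rightarrow> 'a list) set" where
  "gens \<equiv> {star v (perm_act \<pi>) | v \<pi>. bij \<pi>}"

lemma gens_W: "gens \<subseteq> W"
  by (auto simp: W_def intro!: tree_aut_star tree_aut_perm_act)

lemma subgroup_W: "subgroup (W :: ('a::finite list \<Rightarrow> 'a list) set) (tgrp W)"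
  using group.subgroup_self[OF group_W] by simp

lemma subgroup_F: "subgroup (finitary :: ('a::finite list \<Rightarrow> 'a list) set) (tgrp W)"
  unfolding finitary_def using group.generate_is_subgroup[OF group_W] gens_W by simp

lemma F_W: "(finitary :: ('a::finite list \<Rightarrow> 'a list) set) \<subseteq> W"
  using subgroup.subset[OF subgroup_F] by simp

lemma gens_F: "bij \<pi> \<Longrightarrow> star v (perm_act \<pi>) \<in> (finitary :: ('a::finite list \<Rightarrow> 'a list) set)"
  unfolding finitary_def by (rule generate.incl) blast

lemma star_Nil: "star [] f = f"
  by (simp add: star_def fun_eq_iff)

lemma F_comp: "g \<in> finitary \<Longrightarrow> h \<in> finitary \<Longrightarrow> g \<circ> h \<in> (finitary :: ('a::finite list \<Rightarrow> 'a list) set)"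
  using subgroup.m_closed[OF subgroup_F, of h g] by simp

lemma F_id: "id \<in> (finitary :: ('a::finite list \<Rightarrow> 'a list) set)"
  using subgroup.one_closed[OF subgroup_F] by simp

lemma F_inv: "g \<in> finitary \<Longrightarrow> hinv g \<in> (finitary :: ('a::finite list \<Rightarrow> 'a list) set)"
  using subgroup.m_inv_closed[OF subgroup_F, of g] inv_W[of g] F_W by auto

lemma hinv_star: "tree_aut h \<Longrightarrow> hinv (star v h) = star v (hinv h)"
  by (rule inv_unique_comp) (simp_all add: star_comp star_id comp_inv_self inv_comp_self)

lemma star_F1:
  assumes "g \<in> (finitary :: ('a::finite list \<Rightarrow> 'a list) set)"
  shows "star [x] g \<in> finitary"
  using assms unfolding finitary_def
proof (induction rule: generate.induct)
  case one
  have "star [x] (id :: 'a list \<Rightarrow> 'a list) = id" by (rule star_id)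
  moreover have "(id :: 'a list \<Rightarrow> 'a list) \<in> generate (tgrp W) gens"
    using generate.one[of "tgrp W" gens] by simp
  ultimately show ?case by (simp add: id_def)
next
  case (incl h)
  then obtain v \<pi> where h: "h = star v (perm_act \<pi>)" "bij \<pi>" by blast
  show ?case unfolding h star_star by (rule generate.incl) (use h in auto)
next
  case (inv h)
  then obtain v \<pi> where h: "h = star v (perm_act \<pi>)" "bij \<pi>" by blast
  have hW: "tree_aut h" using h by (simp add: tree_aut_star tree_aut_perm_act)
  have "inv\<^bsub>tgrp W\<^esub> h = hinv h" using hW inv_W[of h] by (simp add: W_def)
  moreover have "star [x] h \<in> W" using hW by (simp add: W_def tree_aut_star)
  moreover have "star [x] h \<in> generate (tgrp W) gens"
    unfolding h star_star by (rule generate.incl) (use h in auto)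
  ultimately have "inv\<^bsub>tgrp W\<^esub> (star [x] h) \<in> generate (tgrp W) gens"
    using group.generate_m_inv_closed[OF group_W, of gens] gens_W by simp
  moreover have "inv\<^bsub>tgrp W\<^esub> (star [x] h) = star [x] (hinv h)"
    using inv_W[of "star [x] h"] \<open>star [x] h \<in> W\<close> hinv_star[OF hW] by simp
  ultimately show ?case using \<open>inv\<^bsub>tgrp W\<^esub> h = hinv h\<close> by metis
next
  case (eng h1 h2)
  have "star [x] (h1 \<otimes>\<^bsub>tgrp W\<^esub> h2) = star [x] h1 \<otimes>\<^bsub>tgrp W\<^esub> star [x] h2"
    by (simp add: star_comp)
  then show ?case using eng.IH generate.eng[of "star [x] h1" "tgrp W" gens "star [x] h2"] by (simp add: comp_def)
qed

lemma star_F: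
  assumes "g \<in> (finitary :: ('a::finite list \<Rightarrow> 'a list) set)"
  shows "star v g \<in> finitary"
proof (induction v)
  case Nil then show ?case using assms by (simp add: star_Nil)
next
  case (Cons x v)
  have "star (x # v) g = star [x] (star v g)" by (simp add: star_star)
  then show ?case using star_F1[OF Cons] by simp
qed

lemma bij_swp: "bij (swp x y)"
proof -
  have "swp x y \<circ> swp x y = id" by (auto simp: swp_def fun_eq_iff)
  then show ?thesis using o_bij by blast
qed

lemma trans_F: "level_transitive (finitary :: ('a::finite list \<Rightarrow> 'a list) set)"
  unfolding level_transitive_def
proof (intro allI impI)
  fix n and u w :: "'a list"
  assume "length u = n \<and> length w = n"
  then have "length u = length w" by simp
  then show "\<exists>g\<in>finitary. g u = w"
  proof (induction u arbitrary: w)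
    case Nil then show ?case using F_id by (intro bexI[of _ id]) simp_all
  next
    case (Cons x u)
    then obtain y w' where w: "w = y # w'" "length u = length w'" by (cases w) auto
    then obtain g' where g': "g' \<in> finitary" "g' u = w'" using Cons.IH by blast
    define g where "g = perm_act (swp x y) \<circ> star [x] g'"
    have "g \<in> finitary" unfolding g_def
      using F_comp[OF gens_F[OF bij_swp, of "[]" x y, unfolded star_Nil] star_F1[OF g'(1)]] .
    moreover have "g (x # u) = w" using g' w by (simp add: g_def star_def perm_act_def swp_def)
    ultimately show ?case by blast
  qed
qed

lemma trans_W: "level_transitive (W :: ('a::finite list \<Rightarrow> 'a list) set)"
  using trans_F F_W unfolding level_transitive_def by blast

lemma layered_F: "layered (finitary :: ('a::finite list \<Rightarrow> 'a list) set)"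
  unfolding layered_def using subgroup_F trans_F star_F1 by blast

lemma layered_W: "layered (W :: ('a::finite list \<Rightarrow> 'a list) set)"
  unfolding layered_def using subgroup_W trans_W by (auto simp: W_def tree_aut_star)



lemma state_W: "g \<in> W \<Longrightarrow> state g v \<in> (W :: ('a::finite list \<Rightarrow> 'a list) set)"
  by (simp add: W_def tree_aut_state)

lemma hinv_state:
  assumes "tree_aut (h :: 'a::finite list \<Rightarrow> 'a list)"
  shows "hinv (state h (hinv h v)) = state (hinv h) v"
proof (rule inv_unique_comp)
  have hi: "tree_aut (hinv h)" using tree_aut_inv[OF assms] .
  have hv: "h (hinv h v) = v" using assms by (simp add: tree_aut_def bij_is_surj surj_f_inv_f)
  show "state h (hinv h v) \<circ> state (hinv h) v = id"
    using state_comp[OF assms hi, of v] comp_inv_self[OF assms] by (simp add: state_id)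
  show "state (hinv h) v \<circ> state h (hinv h v) = id"
    using state_comp[OF hi assms, of "hinv h v"] inv_comp_self[OF assms] hv by (simp add: state_id)
qed

lemma state_gen_F:
  assumes "bij \<pi>"
  shows "state (star u (perm_act \<pi>)) v \<in> (finitary :: ('a::finite list \<Rightarrow> 'a list) set)"
proof -
  have p: "perm_act \<pi> \<in> (finitary :: ('a list \<Rightarrow> 'a list) set)"
    using gens_F[OF assms, of "[]"] by (simp add: star_Nil)
  have e: "state (star u (perm_act \<pi>)) v =
    (if take (length u) v = u then state (perm_act \<pi>) (drop (length u) v)
     else if take (length v) u = v then star (drop (length v) u) (perm_act \<pi>) else id)"
    by (rule state_star[OF tree_aut_perm_act[OF assms]])
  have s: "state (perm_act \<pi>) r \<in> (finitary :: ('a list \<Rightarrow> 'a list) set)" for r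
    unfolding state_perm_act by (auto simp: p F_id)
  show ?thesis unfolding e using s gens_F[OF assms] by (simp add: F_id)
qed

lemma state_F:
  assumes "g \<in> (finitary :: ('a::finite list \<Rightarrow> 'a list) set)"
  shows "state g v \<in> finitary"
  using assms unfolding finitary_def
proof (induction arbitrary: v rule: generate.induct)
  case one
  have "state (id :: 'a list \<Rightarrow> 'a list) v = id" by (rule state_id)
  moreover have "(id :: 'a list \<Rightarrow> 'a list) \<in> generate (tgrp W) gens" using F_id unfolding finitary_def .
  ultimately show ?case by (simp add: id_def)
next
  case (incl h)
  then obtain u \<pi> where h: "h = star u (perm_act \<pi>)" "bij \<pi>" by blast
  show ?case using state_gen_F[OF h(2)] unfolding h finitary_def .
next
  case (inv h)
  then obtain u \<pi> where h: "h = star u (perm_act \<pi>)" "bij \<pi>" by blast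
  have hW: "tree_aut h" using h by (simp add: tree_aut_star tree_aut_perm_act)
  have e1: "inv\<^bsub>tgrp W\<^esub> h = hinv h" using hW inv_W[of h] by (simp add: W_def)
  have e2: "state (hinv h) v = hinv (state h (hinv h v))" using hinv_state[OF hW] by simp
  have "state h (hinv h v) \<in> finitary" using state_gen_F[OF h(2)] h(1) by simp
  then have "hinv (state h (hinv h v)) \<in> finitary" by (rule F_inv)
  then show ?case unfolding e1 e2 finitary_def .
next
  case (eng h1 h2)
  have "h1 \<in> W" "h2 \<in> W" using eng.hyps F_W unfolding finitary_def by auto
  then have e: "state (h2 \<circ> h1) v = state h2 (h1 v) \<circ> state h1 v"
    using state_comp[of h2 h1 v] by (simp add: W_def)
  have "state h2 (h1 v) \<circ> state h1 v \<in> finitary"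
    using F_comp eng.IH unfolding finitary_def by blast
  then have "state (h2 \<circ> h1) v \<in> generate (tgrp W) gens" unfolding e finitary_def .
  then show ?case by (simp add: comp_def)
qed



lemma tgrp_restrict: "(tgrp W)\<lparr>carrier := G\<rparr> = tgrp G"
  by (simp add: tgrp_def)

lemma group_sub:
  "subgroup G (tgrp (W :: ('a::finite list \<Rightarrow> 'a list) set)) \<Longrightarrow> group (tgrp G)"
  using subgroup.subgroup_is_group[OF _ group_W] tgrp_restrict by metis

lemma G_W: "subgroup G (tgrp W) \<Longrightarrow> G \<subseteq> W"
  using subgroup.subset by fastforce

lemma inv_sub:
  assumes "subgroup G (tgrp (W :: ('a::finite list \<Rightarrow> 'a list) set))" "g \<in> G"
  shows "inv\<^bsub>tgrp G\<^esub> g = hinv g"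
proof -
  have "inv\<^bsub>tgrp G\<^esub> g = inv\<^bsub>tgrp W\<^esub> g"
    using group.m_inv_consistent[OF group_W assms] by (simp add: tgrp_restrict)
  then show ?thesis using inv_W[of g] G_W[OF assms(1)] assms(2) by auto
qed

lemma comp_closed:
  "subgroup G (tgrp W) \<Longrightarrow> g \<in> G \<Longrightarrow> h \<in> G \<Longrightarrow> g \<circ> h \<in> G"
  using subgroup.m_closed[of G "tgrp W" h g] by simp

lemma id_closed: "subgroup G (tgrp W) \<Longrightarrow> id \<in> G"
  using subgroup.one_closed[of G "tgrp W"] by simp

lemma hinv_closed:
  assumes "subgroup G (tgrp (W :: ('a::finite list \<Rightarrow> 'a list) set))" "g \<in> G"
  shows "hinv g \<in> G"
  using subgroup.m_inv_closed[OF assms] inv_W[of g] G_W[OF assms(1)] assms(2) by auto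

lemma funpow_closed:
  assumes "subgroup G (tgrp W)" "g \<in> G" shows "g ^^ j \<in> G"
proof (induction j)
  case 0 then show ?case using id_closed[OF assms(1)] by (simp add: id_def)
next
  case (Suc j)
  have "g \<circ> g ^^ j \<in> G" by (rule comp_closed[OF assms(1,2) Suc.IH])
  then show ?case by (simp only: funpow.simps(2))
qed

lemma funpow_fix: "f u = u \<Longrightarrow> (f ^^ t) u = u"
  by (induction t) auto

lemma tree_aut_funpow: "tree_aut f \<Longrightarrow> tree_aut (f ^^ m)"
  by (induction m) (simp_all add: tree_aut_id tree_aut_comp)

lemma state_funpow:
  assumes "tree_aut f" "f v = v"
  shows "state (f ^^ m) v = (state f v) ^^ m"
proof (induction m)
  case 0 then show ?case using state_id[of v] by (simp add: id_def)
next
  case (Suc m)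
  have "state (f \<circ> f ^^ m) v = state f ((f ^^ m) v) \<circ> state (f ^^ m) v"
    by (rule state_comp[OF assms(1) tree_aut_funpow[OF assms(1)]])
  also have "(f ^^ m) v = v" using funpow_fix[of f v] assms(2) by simp
  finally show ?case using Suc by simp
qed

lemma finite_level: "finite {w :: 'a::finite list. length w = n}"
proof -
  have "{w :: 'a list. length w = n} = {xs. set xs \<subseteq> UNIV \<and> length xs = n}" by simp
  then show ?thesis using finite_lists_length_eq[OF finite_UNIV, of n] by simp
qed

lemma funpow_cancel:
  assumes "inj g" "i \<le> j" "(g ^^ i) u = (g ^^ j) u"
  shows "(g ^^ (j - i)) u = u"
proof -
  have "(g ^^ j) u = (g ^^ i) ((g ^^ (j - i)) u)"
    using assms(2) funpow_add[of i "j - i" g] by simp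
  then have "(g ^^ i) u = (g ^^ i) ((g ^^ (j - i)) u)" using assms(3) by simp
  then show ?thesis using inj_fn[OF assms(1), of i] by (simp add: inj_eq)
qed

lemma per_exists:
  assumes "tree_aut (g :: 'a::finite list \<Rightarrow> 'a list)"
  shows "\<exists>l. 0 < l \<and> (g ^^ l) u = u"
proof -
  define K where "K = card {w :: 'a list. length w = length u}"
  define f where "f j = (g ^^ j) u" for j
  have img: "f ` {0..K} \<subseteq> {w. length w = length u}"
    using tree_aut_len[OF tree_aut_funpow[OF assms]] by (auto simp: f_def)
  have "card (f ` {0..K}) \<le> K"
    using card_mono[OF finite_level img] by (simp add: K_def)
  then have "card (f ` {0..K}) < card {0..K}" by simp
  then have "\<not> inj_on f {0..K}" by (rule pigeonhole)
  then obtain i j where ij: "i \<in> {0..K}" "j \<in> {0..K}" "i \<noteq> j" "f i = f j"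
    unfolding inj_on_def by blast
  have inj: "inj g" using assms by (rule tree_aut_inj)
  show ?thesis
  proof (cases "i < j")
    case True
    then show ?thesis using funpow_cancel[OF inj, of i j u] ij(4)
      by (intro exI[of _ "j - i"]) (simp add: f_def)
  next
    case False
    then have "j < i" using ij(3) by simp
    then show ?thesis using funpow_cancel[OF inj, of j i u] ij(4)
      by (intro exI[of _ "i - j"]) (simp add: f_def)
  qed
qed

lemma per_min:
  assumes "tree_aut (g :: 'a::finite list \<Rightarrow> 'a list)"
  shows "\<exists>l. 0 < l \<and> (g ^^ l) u = u \<and> (\<forall>j. 0 < j \<and> j < l \<longrightarrow> (g ^^ j) u \<noteq> u)"
proof -
  obtain l0 where "0 < l0 \<and> (g ^^ l0) u = u" using per_exists[OF assms] by blast
  then have ex: "\<exists>l. 0 < l \<and> (g ^^ l) u = u" by blast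
  define l where "l = (LEAST l. 0 < l \<and> (g ^^ l) u = u)"
  have "0 < l \<and> (g ^^ l) u = u" unfolding l_def by (rule LeastI_ex[OF ex])
  moreover have "\<forall>j. 0 < j \<and> j < l \<longrightarrow> (g ^^ j) u \<noteq> u"
    unfolding l_def using not_less_Least by blast
  ultimately show ?thesis by blast
qed

lemma per_bound:
  assumes "tree_aut (g :: 'a::finite list \<Rightarrow> 'a list)"
    and "\<forall>j. 0 < j \<and> j < l \<longrightarrow> (g ^^ j) u \<noteq> u"
  shows "l \<le> card {w :: 'a list. length w = length u}"
proof -
  define f where "f j = (g ^^ j) u" for j
  have inj: "inj g" using tree_aut_inj[OF assms(1)] .
  have "inj_on f {0..<l}"
  proof (rule inj_onI)
    fix i j assume ij: "i \<in> {0..<l}" "j \<in> {0..<l}" "f i = f j"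
    show "i = j"
    proof (rule ccontr)
      assume "i \<noteq> j"
      then consider "i < j" | "j < i" by linarith
      then show False
      proof cases
        case 1
        then have "(g ^^ (j - i)) u = u" using funpow_cancel[OF inj, of i j u] ij(3) by (simp add: f_def)
        moreover have "0 < j - i \<and> j - i < l" using 1 ij(2) by auto
        ultimately show False using assms(2) by blast
      next
        case 2
        then have "(g ^^ (i - j)) u = u" using funpow_cancel[OF inj, of j i u] ij(3) by (simp add: f_def)
        moreover have "0 < i - j \<and> i - j < l" using 2 ij(1) by auto
        ultimately show False using assms(2) by blast
      qed
    qed
  qed
  then have "card (f ` {0..<l}) = l" by (simp add: card_image)
  moreover have "f ` {0..<l} \<subseteq> {w. length w = length u}"
    using tree_aut_len[OF tree_aut_funpow[OF assms(1)]] by (auto simp: f_def)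
  ultimately show ?thesis using card_mono[OF finite_level] by metis
qed

lemma gcd_lemma:
  fixes L :: "nat set"
  assumes "finite L" "L \<noteq> {}" "0 \<notin> L"
  shows "Gcd ((\<lambda>l. int (Lcm L div l)) ` L) = 1"
proof -
  define E where "E = Lcm L"
  have E0: "E \<noteq> 0" using assms Lcm_0_iff[OF assms(1)] by (simp add: E_def)
  define d where "d = Gcd ((\<lambda>l. int (E div l)) ` L)"
  have d0: "d \<ge> 0" by (simp add: d_def)
  have dd: "nat d dvd E div l" if "l \<in> L" for l
  proof -
    have "d dvd int (E div l)" unfolding d_def using that by (intro Gcd_dvd) blast
    then have "int (nat d) dvd int (E div l)" using d0 by simp
    then show ?thesis by (simp only: int_dvd_int_iff)
  qed
  obtain l0 where l0: "l0 \<in> L" using assms(2) by blast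
  have "l0 dvd E" unfolding E_def using l0 by (rule dvd_Lcm)
  then have "E div l0 \<noteq> 0" using E0 l0 assms(3) by (metis dvd_div_eq_0_iff)
  then have nd0: "nat d \<noteq> 0" using dd[OF l0] by auto
  have "E div l0 dvd E" using \<open>l0 dvd E\<close> by (metis dvd_mult_div_cancel dvd_triv_right)
  then have dE: "nat d dvd E" using dd[OF l0] by (rule dvd_trans[rotated])
  have "l dvd E div nat d" if lL: "l \<in> L" for l
  proof -
    have lE: "l dvd E" unfolding E_def using lL by (rule dvd_Lcm)
    obtain t where t: "E div l = nat d * t" using dd[OF lL] by (auto elim: dvdE)
    have "E = l * (E div l)" using lE by simp
    then have "E = nat d * (l * t)" using t by simp
    then have "E div nat d = l * t" using nd0 by simp
    then show ?thesis by simp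
  qed
  then have "E dvd E div nat d" unfolding E_def by (intro Lcm_least) (simp add: E_def)
  moreover have "E div nat d \<noteq> 0" using E0 dE by (simp add: dvd_div_eq_0_iff)
  ultimately have Ele: "E \<le> E div nat d" by (simp add: dvd_imp_le)
  have "nat d \<le> 1"
  proof (rule ccontr)
    assume "\<not> nat d \<le> 1"
    then have "E div nat d < E" using E0 by (intro div_less_dividend) auto
    then show False using Ele by simp
  qed
  then have "d = 1" using nd0 d0 by linarith
  then show ?thesis by (simp add: d_def E_def)
qed

lemma Gcd_ideal:
  fixes P :: "int \<Rightarrow> bool"
  assumes "finite A" "\<forall>a\<in>A. P a" "P 0" "\<And>x y a b. P x \<Longrightarrow> P y \<Longrightarrow> P (a * x + b * y)"
  shows "P (Gcd A)"
  using assms(1,2)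
proof (induction A rule: finite_induct)
  case empty then show ?case using assms(3) by simp
next
  case (insert a A)
  then have "P (Gcd A)" "P a" by auto
  obtain u v where "u * a + v * Gcd A = gcd a (Gcd A)" using bezout_int by blast
  then show ?case using assms(4)[OF \<open>P a\<close> \<open>P (Gcd A)\<close>, of u v] by simp
qed

lemma fp_suc: "(f ^^ Suc n) x = f ((f ^^ n) x)"
  by simp

lemma orbit_lemma:
  assumes c: "tree_aut c" and l: "0 < l" "(c ^^ l) v = v"
    and mn: "\<forall>j. 0 < j \<and> j < l \<longrightarrow> (c ^^ j) v \<noteq> v"
  shows "((c \<circ> star v k) ^^ l) (v @ w) = (c ^^ l) (v @ k w)"
proof -
  have "\<forall>w. ((c \<circ> star v k) ^^ Suc j) (v @ w) = (c ^^ Suc j) (v @ k w)" if "Suc j \<le> l" for j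
    using that
  proof (induction j)
    case 0 then show ?case by (simp add: star_def)
  next
    case (Suc j)
    show ?case
    proof
      fix w
      have IH: "((c \<circ> star v k) ^^ Suc j) (v @ w) = (c ^^ Suc j) (v @ k w)"
        using Suc.IH[OF Suc_leD[OF Suc.prems]] by blast
      have cj: "(c ^^ Suc j) (v @ k w) = (c ^^ Suc j) v @ state (c ^^ Suc j) v (k w)"
        by (rule tree_aut_app[OF tree_aut_funpow[OF c]])
      have "0 < Suc j \<and> Suc j < l" using Suc.prems by simp
      then have ne: "(c ^^ Suc j) v \<noteq> v" using mn by blast
      have len: "length ((c ^^ Suc j) v) = length v" by (rule tree_aut_len[OF tree_aut_funpow[OF c]])
      have "take (length v) ((c ^^ Suc j) (v @ k w)) \<noteq> v" unfolding cj using ne len by simp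
      then have st: "star v k ((c ^^ Suc j) (v @ k w)) = (c ^^ Suc j) (v @ k w)" by (simp add: star_def)
      have "((c \<circ> star v k) ^^ Suc (Suc j)) (v @ w) = (c \<circ> star v k) (((c \<circ> star v k) ^^ Suc j) (v @ w))"
        by (rule fp_suc)
      also have "\<dots> = c (star v k ((c ^^ Suc j) (v @ k w)))" by (simp only: IH o_apply)
      also have "\<dots> = c ((c ^^ Suc j) (v @ k w))" by (simp only: st)
      also have "\<dots> = (c ^^ Suc (Suc j)) (v @ k w)" by (rule fp_suc[symmetric])
      finally show "((c \<circ> star v k) ^^ Suc (Suc j)) (v @ w) = (c ^^ Suc (Suc j)) (v @ k w)" .
    qed
  qed
  then show ?thesis using l(1) by (metis Suc_pred le_refl)
qed



lemma char_part:
  fixes G :: "('a::finite list \<Rightarrow> 'a list) set" and E :: nat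
  assumes sg: "subgroup G (tgrp W)"
  defines "S \<equiv> {g ^^ E | g. g \<in> G}"
  shows "characteristic (generate (tgrp G) S) (tgrp G)"
  unfolding characteristic_def
proof (intro conjI ballI)
  have grp: "group (tgrp G)" by (rule group_sub[OF sg])
  have SG: "S \<subseteq> carrier (tgrp G)" unfolding S_def using funpow_closed[OF sg] by auto
  show "subgroup (generate (tgrp G) S) (tgrp G)" by (rule group.generate_is_subgroup[OF grp SG])
  fix \<phi> assume phi: "\<phi> \<in> iso (tgrp G) (tgrp G)"
  then have hom: "\<phi> \<in> hom (tgrp G) (tgrp G)" and bb: "bij_betw \<phi> G G"
    by (auto simp: iso_def)
  have gh: "group_hom (tgrp G) (tgrp G) \<phi>"
    using grp hom by (simp add: group_hom_def group_hom_axioms_def)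
  have pw: "\<phi> (g ^^ E) = \<phi> g ^^ E" if "g \<in> G" for g
    using group_hom.hom_nat_pow[OF gh, of g E] that by (simp add: pow_tgrp)
  have cl: "\<phi> g \<in> G" if "g \<in> G" for g using bb that by (auto simp: bij_betw_def)
  have "\<phi> ` S = S"
  proof
    show "\<phi> ` S \<subseteq> S" unfolding S_def using pw cl by auto
    show "S \<subseteq> \<phi> ` S"
    proof
      fix x assume "x \<in> S"
      then obtain g where g: "g \<in> G" "x = g ^^ E" unfolding S_def by blast
      obtain g' where g': "g' \<in> G" "\<phi> g' = g" using bb g(1) by (metis bij_betw_imp_surj_on imageE)
      have "x = \<phi> (g' ^^ E)" using pw[OF g'(1)] g g' by simp
      moreover have "g' ^^ E \<in> S" unfolding S_def using g'(1) by blast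
      ultimately show "x \<in> \<phi> ` S" by blast
    qed
  qed
  then show "\<phi> ` generate (tgrp G) S = generate (tgrp G) S"
    using group_hom.generate_img[OF gh SG] by simp
qed

lemma fix_part:
  fixes G :: "('a::finite list \<Rightarrow> 'a list) set"
  assumes sg: "subgroup G (tgrp W)"
    and fixE: "\<And>g u. g \<in> G \<Longrightarrow> length u = n \<Longrightarrow> (g ^^ E) u = u"
    and h: "h \<in> generate (tgrp G) {g ^^ E | g. g \<in> G}"
  shows "\<forall>u. length u = n \<longrightarrow> h u = u"
  using h
proof (induction rule: generate.induct)
  case one then show ?case by simp
next
  case (incl h) then show ?case using fixE by auto
next
  case (inv h)
  then obtain g where g: "g \<in> G" "h = g ^^ E" by blast
  have hG: "h \<in> G" using funpow_closed[OF sg g(1)] g(2) by simp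
  have inj: "inj h" using G_W[OF sg] hG tree_aut_inj by (auto simp: W_def)
  show ?case
  proof (intro allI impI)
    fix u :: "'a list" assume "length u = n"
    then have "h u = u" using fixE g by simp
    then show "(inv\<^bsub>tgrp G\<^esub> h) u = u" using inv_sub[OF sg hG] inj by (simp add: inv_f_eq)
  qed
next
  case (eng h1 h2) then show ?case by simp
qed



lemma key_part:
  fixes G :: "('a::finite list \<Rightarrow> 'a list) set" and n E :: nat and L :: "nat set"
  assumes sg: "subgroup G (tgrp W)" and tr: "level_transitive G"
    and st: "\<And>g v. g \<in> G \<Longrightarrow> state g v \<in> G" and sv: "\<And>g v. g \<in> G \<Longrightarrow> star v g \<in> G"
    and L_def: "L = {l. 0 < l \<and> (\<exists>g\<in>G. \<exists>u. length u = n \<and> (g ^^ l) u = u \<and> (\<forall>j. 0 < j \<and> j < l \<longrightarrow> (g ^^ j) u \<noteq> u))}"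
    and E_def: "E = Lcm L"
    and Lfin: "finite L" and Lne: "L \<noteq> {}" and L0: "0 \<notin> L"
    and H_def: "H = generate (tgrp G) {g ^^ E | g. g \<in> G}"
    and Hfix: "\<And>h. h \<in> H \<Longrightarrow> \<forall>u. length u = n \<longrightarrow> h u = u"
    and v: "length v = n" and k': "k' \<in> G"
  shows "\<exists>h\<in>H. state h v = k'"
proof -
  have grp: "group (tgrp G)" by (rule group_sub[OF sg])
  have GW: "tree_aut g" if "g \<in> G" for g using G_W[OF sg] that by (auto simp: W_def)
  have SG: "{g ^^ E | g. g \<in> G} \<subseteq> carrier (tgrp G)" using funpow_closed[OF sg] by auto
  have HG: "H \<subseteq> G" unfolding H_def using group.generate_incl[OF grp SG] by simp
  have Hsub: "subgroup H (tgrp G)" unfolding H_def by (rule group.generate_is_subgroup[OF grp SG])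
  have Hv: "h v = v" if "h \<in> H" for h using Hfix[OF that] v by simp
  have HW: "tree_aut h" if "h \<in> H" for h using GW HG that by auto
  have Hcomp: "h2 \<circ> h1 \<in> H" if "h1 \<in> H" "h2 \<in> H" for h1 h2
    using subgroup.m_closed[OF Hsub that] by simp
  have Hinv: "hinv h \<in> H" if "h \<in> H" for h
    using subgroup.m_inv_closed[OF Hsub that] inv_sub[OF sg] HG that by auto
  have Hid: "id \<in> H" using subgroup.one_closed[OF Hsub] by simp
  define T where "T = {state h v | h. h \<in> H}"
  have Tsub: "subgroup T (tgrp W)"
  proof (rule group.subgroupI[OF group_W])
    show "T \<subseteq> carrier (tgrp W)" unfolding T_def using state_W G_W[OF sg] HG by auto
    show "T \<noteq> {}" unfolding T_def using Hid by blast
  next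
    fix a assume "a \<in> T"
    then obtain h where h: "h \<in> H" "a = state h v" unfolding T_def by blast
    have "hinv h v = v" using Hv[OF h(1)] HW[OF h(1)] tree_aut_inj by (metis inv_f_eq)
    then have "hinv a = state (hinv h) v" using hinv_state[OF HW[OF h(1)], of v] h(2) by simp
    moreover have "a \<in> W" using h state_W G_W[OF sg] HG by auto
    ultimately have "inv\<^bsub>tgrp W\<^esub> a = state (hinv h) v" using inv_W[of a] by simp
    then show "inv\<^bsub>tgrp W\<^esub> a \<in> T" unfolding T_def using Hinv[OF h(1)] by blast
  next
    fix a b assume "a \<in> T" "b \<in> T"
    then obtain h1 h2 where h: "h1 \<in> H" "a = state h1 v" "h2 \<in> H" "b = state h2 v"
      unfolding T_def by blast
    have "state (h2 \<circ> h1) v = state h2 v \<circ> state h1 v"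
      by (rule state_fix_comp[OF HW[OF h(3)] HW[OF h(1)] Hv[OF h(1)]])
    then have "a \<otimes>\<^bsub>tgrp W\<^esub> b = state (h2 \<circ> h1) v" using h by simp
    then show "a \<otimes>\<^bsub>tgrp W\<^esub> b \<in> T" unfolding T_def using Hcomp[OF h(1) h(3)] by blast
  qed
  have k'W: "k' \<in> carrier (tgrp W)" using k' G_W[OF sg] by auto
  define I where "I = {z::int. k' [^]\<^bsub>tgrp W\<^esub> z \<in> T}"
  have I0: "0 \<in> I" unfolding I_def using subgroup.one_closed[OF Tsub] by simp
  have Icomb: "a * x + b * y \<in> I" if "x \<in> I" "y \<in> I" for x y a b
  proof -
    have "k' [^]\<^bsub>tgrp W\<^esub> (a * x + b * y) = (k' [^]\<^bsub>tgrp W\<^esub> x) [^]\<^bsub>tgrp W\<^esub> a \<otimes>\<^bsub>tgrp W\<^esub> (k' [^]\<^bsub>tgrp W\<^esub> y) [^]\<^bsub>tgrp W\<^esub> b"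
      using group.int_pow_mult[OF group_W k'W] group.int_pow_pow[OF group_W k'W]
      by (simp add: mult.commute)
    moreover have "(k' [^]\<^bsub>tgrp W\<^esub> x) [^]\<^bsub>tgrp W\<^esub> a \<in> T" "(k' [^]\<^bsub>tgrp W\<^esub> y) [^]\<^bsub>tgrp W\<^esub> b \<in> T"
      using group.subgroup_int_pow_closed[OF group_W Tsub] that unfolding I_def by auto
    ultimately show ?thesis unfolding I_def using subgroup.m_closed[OF Tsub] by simp
  qed
  have IL: "int (E div l) \<in> I" if lL: "l \<in> L" for l
  proof -
    obtain g u where g: "g \<in> G" "length u = n" "(g ^^ l) u = u"
      and gmin: "\<forall>j. 0 < j \<and> j < l \<longrightarrow> (g ^^ j) u \<noteq> u" and l0: "0 < l"
      using lL unfolding L_def by blast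
    obtain t where t: "t \<in> G" "t v = u" using tr v g(2) unfolding level_transitive_def by metis
    have tA: "tree_aut t" using GW t(1) .
    have tsurj: "t (hinv t y) = y" for y using tA by (simp add: tree_aut_def bij_is_surj surj_f_inv_f)
    have tinv: "hinv t u = v" using t(2) tree_aut_inj[OF tA] by (metis inv_f_eq)
    define c where "c = hinv t \<circ> g \<circ> t"
    have cG: "c \<in> G" unfolding c_def using comp_closed[OF sg] hinv_closed[OF sg t(1)] g(1) t(1) by simp
    have cA: "tree_aut c" using GW cG .
    have cpow: "(c ^^ j) x = hinv t ((g ^^ j) (t x))" for j x
    proof (induction j)
      case 0 then show ?case using tA by (simp add: tree_aut_def bij_is_inj)
    next
      case (Suc j) then show ?case by (simp add: c_def tsurj)
    qed
    have cl: "(c ^^ l) v = v" using cpow[of l v] t(2) g(3) tinv by simp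
    have cmin: "\<forall>j. 0 < j \<and> j < l \<longrightarrow> (c ^^ j) v \<noteq> v"
    proof (intro allI impI)
      fix j assume j: "0 < j \<and> j < l"
      show "(c ^^ j) v \<noteq> v"
      proof
        assume "(c ^^ j) v = v"
        then have "hinv t ((g ^^ j) u) = v" using cpow[of j v] t(2) by simp
        then have "(g ^^ j) u = u" using tsurj t(2) by metis
        then show False using gmin j by blast
      qed
    qed
    define s where "s = state (c ^^ l) v"
    have sG: "s \<in> G" unfolding s_def by (rule st[OF funpow_closed[OF sg cG]])
    have sA: "tree_aut s" using GW sG .
    have ssurj: "s (hinv s y) = y" for y using sA by (simp add: tree_aut_def bij_is_surj surj_f_inv_f)
    define k where "k = hinv s \<circ> k'"
    have kG: "k \<in> G" unfolding k_def using comp_closed[OF sg hinv_closed[OF sg sG] k'] .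
    define a where "a = c \<circ> star v k"
    have aG: "a \<in> G" unfolding a_def using comp_closed[OF sg cG sv[OF kG]] .
    have aA: "tree_aut a" using GW aG .
    have aw: "(a ^^ l) (v @ w) = v @ k' w" for w
    proof -
      have "(a ^^ l) (v @ w) = (c ^^ l) (v @ k w)"
        unfolding a_def by (rule orbit_lemma[OF cA l0 cl cmin])
      also have "\<dots> = (c ^^ l) v @ s (k w)"
        unfolding s_def by (rule tree_aut_app[OF tree_aut_funpow[OF cA]])
      also have "\<dots> = v @ k' w" using cl ssurj by (simp add: k_def)
      finally show ?thesis .
    qed
    have k'A: "tree_aut k'" using GW k' .
    have av: "(a ^^ l) v = v" using aw[of "[]"] k'A by (simp add: tree_aut_def)
    have sa: "state (a ^^ l) v = k'"
    proof
      fix w show "state (a ^^ l) v w = k' w" by (simp add: state_def aw)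
    qed
    have lE: "l dvd E" unfolding E_def using lL by (rule dvd_Lcm)
    have aE: "a ^^ E = (a ^^ l) ^^ (E div l)" using lE by (simp add: funpow_mult)
    have e: "state (a ^^ E) v = k' ^^ (E div l)"
      unfolding aE using state_funpow[OF tree_aut_funpow[OF aA] av] sa by simp
    have "a ^^ E \<in> H" unfolding H_def using aG by (intro generate.incl) blast
    then have "state (a ^^ E) v \<in> T" unfolding T_def by blast
    then have "k' ^^ (E div l) \<in> T" unfolding e .
    then show ?thesis unfolding I_def by (simp add: int_pow_int pow_tgrp)
  qed
  have "Gcd ((\<lambda>l. int (E div l)) ` L) \<in> I"
    using Gcd_ideal[of "(\<lambda>l. int (E div l)) ` L" "\<lambda>z. z \<in> I"] Lfin IL I0 Icomb by auto
  then have "1 \<in> I" using gcd_lemma[OF Lfin Lne L0] E_def by simp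
  then have "k' \<in> T" unfolding I_def using group.int_pow_1[OF group_W k'W] by simp
  then show ?thesis unfolding T_def by blast
qed



lemma star_W: "g \<in> W \<Longrightarrow> star v g \<in> (W :: ('a list \<Rightarrow> 'a list) set)"
  unfolding W_def using tree_aut_star by blast

lemma saturated_generic:
  fixes G :: "('a::finite list \<Rightarrow> 'a list) set"
  assumes sg: "subgroup G (tgrp W)" and tr: "level_transitive G"
    and st: "\<And>g v. g \<in> G \<Longrightarrow> state g v \<in> G" and sv: "\<And>g v. g \<in> G \<Longrightarrow> star v g \<in> G"
  shows "saturated G"
  unfolding saturated_def
proof (intro conjI allI)
  show "subgroup G (tgrp W)" by (rule sg)
  fix n
  define L where "L = {l. 0 < l \<and> (\<exists>g\<in>G. \<exists>u. length u = n \<and> (g ^^ l) u = u \<and> (\<forall>j. 0 < j \<and> j < l \<longrightarrow> (g ^^ j) u \<noteq> u))}"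
  define E where "E = Lcm L"
  define H where "H = generate (tgrp G) {g ^^ E | g. g \<in> G}"
  have GW: "tree_aut g" if "g \<in> G" for g using G_W[OF sg] that by (auto simp: W_def)
  have Lsub: "L \<subseteq> {0..card {w :: 'a list. length w = n}}"
  proof
    fix l assume "l \<in> L"
    then obtain g u where "g \<in> G" "length u = n" "\<forall>j. 0 < j \<and> j < l \<longrightarrow> (g ^^ j) u \<noteq> u"
      unfolding L_def by blast
    then show "l \<in> {0..card {w :: 'a list. length w = n}}"
      using per_bound[OF GW] by fastforce
  qed
  have Lfin: "finite L" using finite_subset[OF Lsub] by simp
  have L0: "0 \<notin> L" by (simp add: L_def)
  have "1 \<in> L" unfolding L_def using id_closed[OF sg]
    by (intro CollectI conjI bexI[of _ id] exI[of _ "replicate n undefined"]) auto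
  then have Lne: "L \<noteq> {}" by blast
  have fixE: "(g ^^ E) u = u" if g: "g \<in> G" and u: "length u = n" for g u
  proof -
    obtain l where l: "0 < l" "(g ^^ l) u = u" "\<forall>j. 0 < j \<and> j < l \<longrightarrow> (g ^^ j) u \<noteq> u"
      using per_min[OF GW[OF g]] by blast
    then have "l \<in> L" unfolding L_def using g u by blast
    then have "l dvd E" unfolding E_def by (rule dvd_Lcm)
    then have "g ^^ E = (g ^^ l) ^^ (E div l)" by (simp add: funpow_mult)
    then show ?thesis using funpow_fix[of "g ^^ l" u "E div l"] l(2) by simp
  qed
  have Hfix: "\<forall>u. length u = n \<longrightarrow> h u = u" if "h \<in> H" for h
    using fix_part[OF sg fixE] that unfolding H_def by blast
  show "\<exists>H. characteristic H (tgrp G) \<and> (\<forall>h\<in>H. \<forall>u. length u = n \<longrightarrow> h u = u) \<and>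
          (\<forall>v. length v = n \<longrightarrow> level_transitive {state h v |h. h \<in> H})"
  proof (intro exI[of _ H] conjI ballI allI impI)
    show "characteristic H (tgrp G)" unfolding H_def by (rule char_part[OF sg])
  next
    fix h and u :: "'a list" assume "h \<in> H" "length u = n" then show "h u = u" using Hfix by blast
  next
    fix v :: "'a list" assume v: "length v = n"
    have key: "\<exists>h\<in>H. state h v = k'" if "k' \<in> G" for k'
      by (rule key_part[OF sg tr st sv L_def E_def Lfin Lne L0 H_def Hfix v that])
    show "level_transitive {state h v |h. h \<in> H}"
      unfolding level_transitive_def
    proof (intro allI impI)
      fix m and x y :: "'a list" assume "length x = m \<and> length y = m"
      then obtain g where "g \<in> G" "g x = y" using tr unfolding level_transitive_def by blast
      then obtain h where "h \<in> H" "state h v = g" using key by blast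
      then show "\<exists>g\<in>{state h v |h. h \<in> H}. g x = y" using \<open>g x = y\<close> by blast
    qed
  qed
qed

theorem proposition3p10:
  assumes "card (UNIV :: 'a::finite set) \<ge> 2"
  shows "layered (finitary :: ('a list \<Rightarrow> 'a list) set) \<and> saturated (finitary :: ('a list \<Rightarrow> 'a list) set)
         \<and> layered (W :: ('a list \<Rightarrow> 'a list) set) \<and> saturated (W :: ('a list \<Rightarrow> 'a list) set)"
proof (intro conjI)
  show "layered (finitary :: ('a list \<Rightarrow> 'a list) set)" by (rule layered_F)
  show "layered (W :: ('a list \<Rightarrow> 'a list) set)" by (rule layered_W)
  show "saturated (finitary :: ('a list \<Rightarrow> 'a list) set)"
    by (rule saturated_generic[OF subgroup_F trans_F state_F star_F])
  show "saturated (W :: ('a list \<Rightarrow> 'a list) set)"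
    by (rule saturated_generic[OF subgroup_W trans_W state_W star_W])
qed


end
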